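(* Let $m,k\in\mathbb{N}$ and let $\beta\in\mathbb{C}$ with $\beta,\ 2\beta+2m+2k+2\notin\mathbb{Z}_0^-$. Then \[ {}_3F_2\left[\begin{array}{r} -2m-1,\ 2+2m,\ \beta;\\ -2m-2k-1,\ 2\beta+2m+2k+2;\end{array}1\right]_{2m+1}=\frac{(k+1)(2\beta+2m+2k+1)(2\beta+2k+1)_{2m}\left(2+k\right)_{2m}}{(2m+2k+1)(\beta+k+1)(2k+1)_{2m}\left(2+\beta+k\right)_{2m}}. \]
   Context: $\mathbb{N}=\{1,2,3,\dots\}$, $\mathbb{Z}_0^-=\{0,-1,-2,\dots\}$. For $a\in\mathbb{C}$ and $n\in\mathbb{N}_0$, $(a)_0=1$ and $(a)_n=a(a+1)\cdots(a+n-1)$. For $N\in\mathbb{N}_0$, ${}_3F_2\left[\begin{array}{r} a_1,a_2,a_3;\\ b_1,b_2;\end{array}z\right]_N=\sum_{n=0}^{N}\frac{(a_1)_n(a_2)_n(a_3)_n}{(b_1)_n(b_2)_n}\frac{z^n}{n!}$ (the sum of the first $N+1$ terms), defined whenever $(b_1)_n(b_2)_n\neq0$ for $0\le n\le N$. *)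

theory Defs
  imports Complex_Main
begin

definition hyp3F2_trunc :: "complex \<Rightarrow> complex \<Rightarrow> complex \<Rightarrow> complex \<Rightarrow> complex \<Rightarrow> complex \<Rightarrow> nat \<Rightarrow> complex" where
  "hyp3F2_trunc a1 a2 a3 b1 b2 z N =
     (\<Sum>n=0..N. pochhammer a1 n * pochhammer a2 n * pochhammer a3 n
                 / (pochhammer b1 n * pochhammer b2 n) * z ^ n / of_nat (fact n))"

definition nonpos_int_c :: "complex \<Rightarrow> bool" where
  "nonpos_int_c z \<longleftrightarrow> (\<exists>n::nat. z = - of_nat n)"

end

theory Submission imports Defs begin

definition T :: "nat \<Rightarrow> nat \<Rightarrow> complex \<Rightarrow> nat \<Rightarrow> complex" where
 "T N k b n = pochhammer (- of_nat N) n * pochhammer (of_nat N + 1) n * pochhammer b n /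
    (pochhammer (- of_nat N - 2*of_nat k) n * pochhammer (2*b + of_nat N + 2*of_nat k + 1) n * of_nat (fact n))"

lemma poch_shift: "a * pochhammer (a+1) n = pochhammer a n * (a + of_nat n)"
  by (metis pochhammer_rec pochhammer_Suc)

lemma Im_nz: "Im b \<noteq> 0 \<Longrightarrow> 2*b + of_nat j \<noteq> - of_nat i"
  by (auto simp: complex_eq_iff)

definition GG :: "nat \<Rightarrow> nat \<Rightarrow> complex \<Rightarrow> nat \<Rightarrow> complex" where
  "GG N k b n = - of_nat n * (of_nat N + 2*of_nat k + 1) * (2*b + of_nat N + 2*of_nat k + 1 + of_nat n) * T (N+1) k b n / (of_nat N + 1 + of_nat n)"

lemma step:
  fixes b :: complex
  assumes ib: "Im b \<noteq> 0" and k: "k \<ge> 1" and n: "n \<le> N+1"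
  defines "d \<equiv> 2*b + of_nat N + 2*of_nat k + 1"
  shows "GG N k b (Suc n) - GG N k b n = (b + of_nat k + 1 + of_nat N) * (2*of_nat k + 1 + of_nat N) * T (N+1) k b n
           - d * (of_nat k + 1 + of_nat N) * T N k b n"
proof -
  define x where "x = (of_nat N :: complex)"
  define y where "y = (of_nat k :: complex)"
  define z where "z = (of_nat n :: complex)"
  define a where "a = - x - 1"
  define c where "c = - x - 1 - 2*y"
  define e where "e = x + 1"
  define g where "g = x + 1 + z"
  define h where "h = x + 2 + z"
  define p where "p = c + z"
  define q where "q = d + z"
  define r where "r = d + 1 + z"
  define s where "s = z + 1"
  define P where "P = pochhammer a n"
  define Q where "Q = pochhammer e n"
  define R where "R = pochhammer b n"
  define D where "D = pochhammer c n"
  define E where "E = pochhammer d n"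
  define f where "f = (of_nat (fact n) :: complex)"
  define pN where "pN = pochhammer (- x) n"
  define pN2 where "pN2 = pochhammer (x + 2) n"
  define pNk where "pNk = pochhammer (- x - 2*y) n"
  define pd1 where "pd1 = pochhammer (d + 1) n"
  have nz_int: "(of_nat j :: complex) + of_nat i + 1 \<noteq> 0" for i j
  proof -
    have "(of_nat (Suc (j+i)) :: complex) \<noteq> 0" by (rule of_nat_neq_0)
    then show ?thesis by (simp add: add_ac)
  qed
  have nze: "e \<noteq> 0" using nz_int[of N 0] unfolding e_def x_def by simp
  have "a = - e" unfolding a_def e_def by simp
  then have nza: "a \<noteq> 0" using nze by simp
  have "c = - (of_nat (N + 2*k) + 0 + 1)" unfolding c_def x_def y_def by simp
  then have nzc: "c \<noteq> 0" using nz_int[of "N+2*k" 0] by (simp only: neg_equal_0_iff_equal) simp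

  have nzg: "g \<noteq> 0" using nz_int[of N n] unfolding g_def x_def z_def by (simp add: ac_simps)
  have nzh: "h \<noteq> 0" using nz_int[of N "n+1"] unfolding h_def x_def z_def by (simp add: ac_simps)
  have nzs: "s \<noteq> 0" using nz_int[of n 0] unfolding s_def z_def by simp
  have nzd: "d \<noteq> 0" using ib unfolding d_def by (auto simp: complex_eq_iff)
  have nzq: "q \<noteq> 0" using ib unfolding q_def d_def z_def by (auto simp: complex_eq_iff)
  have nzr: "r \<noteq> 0" using ib unfolding r_def d_def z_def by (auto simp: complex_eq_iff)
  have nzp: "p \<noteq> 0"
  proof
    assume "p = 0"
    then have "(of_nat (N + 1 + 2*k) :: complex) = of_nat n" unfolding p_def c_def x_def y_def z_def by (simp add: algebra_simps)
    then have "N + 1 + 2*k = n" using of_nat_eq_iff by blast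
    then show False using n k by simp
  qed
  have nzf: "f \<noteq> 0" unfolding f_def by simp
  have nzD: "D \<noteq> 0" unfolding D_def
  proof
    assume "pochhammer c n = 0"
    then obtain j where j: "j < n" "c = - of_nat j"
      by (auto simp: pochhammer_eq_0_iff)
    then have "(of_nat (N + 1 + 2*k) :: complex) = of_nat j" unfolding c_def x_def y_def by (simp add: algebra_simps)
    then have "N + 1 + 2*k = j" using of_nat_eq_iff by blast
    then show False using j n k by simp
  qed
  have nzE: "E \<noteq> 0" unfolding E_def
  proof
    assume "pochhammer d n = 0"
    then obtain j where "d = - of_nat j" by (auto simp: pochhammer_eq_0_iff)
    then have "Im d = 0" by simp
    then show False using ib unfolding d_def by simp
  qed
  have e1: "pN = P * (a + z) / a"
    using poch_shift[of a n] nza unfolding P_def pN_def a_def z_def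
    by (simp add: field_simps)
  have e2: "pN2 = Q * g / e"
    using poch_shift[of e n] nze unfolding Q_def pN2_def e_def g_def z_def
    by (simp add: field_simps add_ac)
  have e3: "pNk = D * p / c"
    using poch_shift[of c n] nzc unfolding D_def pNk_def c_def p_def z_def
    by (simp add: field_simps)
  have e4: "pd1 = E * q / d"
    using poch_shift[of d n] nzd unfolding E_def pd1_def q_def z_def
    by (simp add: field_simps)
  have nzpd1: "pd1 \<noteq> 0" using e4 nzE nzq nzd by simp
  have a1: "- of_nat (N+1) = a" unfolding a_def x_def by simp
  have a2: "of_nat (N+1) + 1 = x + 2" unfolding x_def by simp
  have a3: "a - 2 * of_nat k = c" unfolding a_def c_def y_def by simp
  have a4: "2*b + of_nat (N+1) + 2*of_nat k + 1 = d + 1" by (simp add: d_def)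
  have tv: "T (N+1) k b n = P * pN2 * R / (D * pd1 * f)"
    unfolding T_def a4 a2 a1 a3 P_def pN2_def R_def D_def pd1_def f_def by (rule refl)
  have tu: "T N k b n = pN * Q * R / (pNk * E * f)"
    unfolding T_def pN_def Q_def R_def pNk_def E_def f_def d_def x_def y_def e_def by (rule refl)
  have tvs: "T (N+1) k b (Suc n) = P * (a + z) * (pN2 * (x + 2 + z)) * (R * (b + z)) / (D * p * (pd1 * r) * (f * s))"
    unfolding T_def a4 a2 a1 a3 P_def pN2_def R_def D_def pd1_def f_def pochhammer_Suc fact_Suc p_def r_def s_def z_def
    by (simp add: mult_ac add_ac distrib_left)
  have gs: "GG N k b (Suc n) = - s * (x + 2*y + 1) * r * T (N+1) k b (Suc n) / h"
    unfolding GG_def d_def s_def r_def h_def x_def y_def z_def by (simp add: algebra_simps)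
  have g0: "GG N k b n = - z * (x + 2*y + 1) * q * T (N+1) k b n / g"
    unfolding GG_def d_def g_def q_def x_def y_def z_def by (simp add: algebra_simps)
  define W where "W = P * Q * R / (D * E * f)"
  define vr where "vr = (g / e) * (d / q)"
  define ur where "ur = ((a + z) / a) * (c / p)"
  define vr' where "vr' = vr * ((a + z) * (x + 2 + z) * (b + z)) / (p * r * s)"
  have hV: "T (N+1) k b n = W * vr"
    unfolding tv e2 e4 W_def vr_def using nze nzq nzd nzD nzE nzf by (simp add: field_simps)
  have hU: "T N k b n = W * ur"
    unfolding tu e1 e3 W_def ur_def using nza nzp nzc nzD nzE nzf by (simp add: field_simps)
  have hV': "T (N+1) k b (Suc n) = W * vr'"
    unfolding tvs e2 e4 W_def vr'_def vr_def using nze nzq nzd nzD nzE nzf nzp nzr nzs by (simp add: field_simps)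
  have key: "- s * (x + 2*y + 1) * r * vr' / h - (- z * (x + 2*y + 1) * q * vr / g)
     = (b + y + 1 + x) * (2*y + 1 + x) * vr - d * (y + 1 + x) * ur"
  proof -
    define K where "K = x + 2*y + 1"
    have hh: "x + 2 + z = h" unfolding h_def by simp
    have t1: "- s * (x + 2*y + 1) * r * vr' / h = - K * vr * (a+z) * (b+z) / p"
      unfolding vr'_def hh K_def using nzs nzr nzh nzp by (simp add: field_simps)
    have t2: "- z * (x + 2*y + 1) * q * vr / g = - z * K * d / e"
      unfolding vr_def K_def using nzg nzq nze by (simp add: field_simps)
    have dx: "d = 2*b + x + 2*y + 1" unfolding d_def x_def y_def by simp
    have poly: "(- K * g * d * (a+z) * (b+z) * a + z * K * d * q * p * a)
       = (b + y + 1 + x) * (2*y + 1 + x) * g * d * p * a - d * (y + 1 + x) * (a + z) * c * e * q"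
      unfolding K_def a_def c_def e_def g_def p_def q_def dx by algebra
    have "- K * vr * (a+z) * (b+z) / p - (- z * K * d / e)
       = (- K * g * d * (a+z) * (b+z) * a + z * K * d * q * p * a) / (e * q * p * a)"
      unfolding vr_def using nze nzq nzp nza by (simp add: field_simps)
    also have "... = ((b + y + 1 + x) * (2*y + 1 + x) * g * d * p * a - d * (y + 1 + x) * (a + z) * c * e * q) / (e * q * p * a)"
      unfolding poly ..
    also have "... = (b + y + 1 + x) * (2*y + 1 + x) * vr - d * (y + 1 + x) * ur"
      unfolding vr_def ur_def using nze nzq nzp nza by (simp add: field_simps)
    finally show ?thesis unfolding t1 t2 .
  qed
  have "GG N k b (Suc n) - GG N k b n = (b + y + 1 + x) * (2*y + 1 + x) * T (N+1) k b n - d * (y + 1 + x) * T N k b n"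
    unfolding gs g0 hV hU hV'
    using arg_cong[OF key, of "\<lambda>t. W * t"] by (simp add: algebra_simps)
  then show ?thesis unfolding x_def y_def d_def by simp
qed
lemma T_zero: "N < n \<Longrightarrow> T N k b n = 0"
  unfolding T_def by (simp add: pochhammer_of_nat_eq_0_lemma)

lemma sumstep:
  fixes b :: complex
  assumes ib: "Im b \<noteq> 0" and k: "k \<ge> 1"
  shows "(b + of_nat k + 1 + of_nat N) * (2*of_nat k + 1 + of_nat N) * (\<Sum>n<N+2. T (N+1) k b n)
       = (2*b + of_nat N + 2*of_nat k + 1) * (of_nat k + 1 + of_nat N) * (\<Sum>n<N+1. T N k b n)"
proof -
  have eq: "(\<Sum>n<N+2. GG N k b (Suc n) - GG N k b n) = (\<Sum>n<N+2. (b + of_nat k + 1 + of_nat N) * (2*of_nat k + 1 + of_nat N) * T (N+1) k b n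
           - (2*b + of_nat N + 2*of_nat k + 1) * (of_nat k + 1 + of_nat N) * T N k b n)"
    by (rule sum.cong[OF refl]) (rule step[OF ib k], simp)
  have "(\<Sum>n<N+2. GG N k b (Suc n) - GG N k b n) = GG N k b (N+2) - GG N k b 0"
    by (rule sum_lessThan_telescope)
  also have "... = 0" unfolding GG_def using T_zero[of "N+1" "N+2" k b] by simp
  finally have "(\<Sum>n<N+2. (b + of_nat k + 1 + of_nat N) * (2*of_nat k + 1 + of_nat N) * T (N+1) k b n
           - (2*b + of_nat N + 2*of_nat k + 1) * (of_nat k + 1 + of_nat N) * T N k b n) = 0"
    unfolding eq .
  then have "(b + of_nat k + 1 + of_nat N) * (2*of_nat k + 1 + of_nat N) * (\<Sum>n<N+2. T (N+1) k b n)
       = (2*b + of_nat N + 2*of_nat k + 1) * (of_nat k + 1 + of_nat N) * (\<Sum>n<N+2. T N k b n)"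
    by (simp only: sum_subtractf sum_distrib_left[symmetric] right_minus_eq)
  also have "(\<Sum>n<N+2. T N k b n) = (\<Sum>n<N+1. T N k b n)"
    using T_zero[of N "N+1" k b] by simp
  finally show ?thesis .
qed


definition R2 :: "nat \<Rightarrow> nat \<Rightarrow> complex \<Rightarrow> complex" where
  "R2 N k b = pochhammer (2*b + 2*of_nat k + 1) N * pochhammer (of_nat k + 1) N
     / (pochhammer (b + of_nat k + 1) N * pochhammer (2*of_nat k + 1) N)"

lemma gen:
  fixes b :: complex
  assumes ib: "Im b \<noteq> 0" and k: "k \<ge> 1"
  shows "(\<Sum>n<N+1. T N k b n) = R2 N k b"
proof (induction N)
  case 0
  then show ?case by (simp add: T_def R2_def)
next
  case (Suc N)
  have nz1: "b + of_nat k + 1 + of_nat N \<noteq> 0" using ib by (auto simp: complex_eq_iff)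
  have nz2: "(2*of_nat k + 1 + of_nat N :: complex) \<noteq> 0"
  proof -
    have "(of_nat (Suc (2*k + N)) :: complex) \<noteq> 0" by (rule of_nat_neq_0)
    then show ?thesis by (simp add: add_ac)
  qed
  have nzA: "pochhammer (b + of_nat k + 1) N \<noteq> 0"
  proof
    assume "pochhammer (b + of_nat k + 1) N = 0"
    then obtain j where "b + of_nat k + 1 = - of_nat j" by (auto simp: pochhammer_eq_0_iff)
    then have "Im (b + of_nat k + 1) = Im (- of_nat j :: complex)" by simp
    then have "Im b = 0" by simp
    then show False using ib by simp
  qed
  have nzB: "pochhammer (2*of_nat k + 1 :: complex) N \<noteq> 0"
  proof
    assume "pochhammer (2*of_nat k + 1 :: complex) N = 0"
    then obtain j where "(2*of_nat k + 1 :: complex) = - of_nat j" by (auto simp: pochhammer_eq_0_iff)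
    then have "(2*of_nat k + 1 :: complex) + of_nat j = 0" by simp
    moreover have "(2*of_nat k + 1 :: complex) + of_nat j = of_nat (Suc (2*k + j))" by simp
    ultimately have "(of_nat (Suc (2*k + j)) :: complex) = 0" by simp
    then show False by (simp only: of_nat_eq_0_iff)
  qed
  have eqS: "(b + of_nat k + 1 + of_nat N) * (2*of_nat k + 1 + of_nat N) * (\<Sum>n<Suc N+1. T (Suc N) k b n)
       = (2*b + of_nat N + 2*of_nat k + 1) * (of_nat k + 1 + of_nat N) * R2 N k b"
    using sumstep[OF ib k, of N] Suc by simp
  have "(\<Sum>n<Suc N+1. T (Suc N) k b n) = (2*b + of_nat N + 2*of_nat k + 1) * (of_nat k + 1 + of_nat N) * R2 N k b
     / ((b + of_nat k + 1 + of_nat N) * (2*of_nat k + 1 + of_nat N))"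
  proof -
    define A where "A = b + of_nat k + 1 + of_nat N"
    define B where "B = (2*of_nat k + 1 + of_nat N :: complex)"
    define Y where "Y = (2*b + of_nat N + 2*of_nat k + 1) * (of_nat k + 1 + of_nat N) * R2 N k b"
    define S where "S = (\<Sum>n<Suc N+1. T (Suc N) k b n)"
    have "A * B * S = Y" "A \<noteq> 0" "B \<noteq> 0" using eqS nz1 nz2 unfolding A_def B_def Y_def S_def by auto
    then have "S = Y / (A * B)" by (simp add: eq_divide_eq mult.commute)
    then show ?thesis unfolding A_def B_def Y_def S_def .
  qed
  also have "... = R2 (Suc N) k b"
    unfolding R2_def pochhammer_Suc using nz1 nz2 nzA nzB by (simp add: field_simps)
  finally show ?case .
qed


lemma isCont_poch_comp [continuous_intros]:
  fixes f :: "'a::t2_space \<Rightarrow> 'b::{real_normed_field}"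
  shows "isCont f x \<Longrightarrow> isCont (\<lambda>z. pochhammer (f z) n) x"
  by (rule isCont_o2[where g="\<lambda>z. pochhammer z n"]) (auto intro: isCont_pochhammer)

theorem mainTheorem8:
  fixes m k :: nat and \<beta> :: complex
  assumes "m \<ge> 1" and "k \<ge> 1"
    and "\<not> nonpos_int_c \<beta>"
    and "\<not> nonpos_int_c (2*\<beta> + 2*of_nat m + 2*of_nat k + 2)"
  shows "hyp3F2_trunc (- 2*of_nat m - 1) (2 + 2*of_nat m) \<beta>
            (- 2*of_nat m - 2*of_nat k - 1) (2*\<beta> + 2*of_nat m + 2*of_nat k + 2) 1 (2*m+1)
       = (of_nat k + 1) * (2*\<beta> + 2*of_nat m + 2*of_nat k + 1)
           * pochhammer (2*\<beta> + 2*of_nat k + 1) (2*m) * pochhammer (2 + of_nat k) (2*m)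
         / ((2*of_nat m + 2*of_nat k + 1) * (\<beta> + of_nat k + 1)
           * pochhammer (2*of_nat k + 1) (2*m) * pochhammer (2 + \<beta> + of_nat k) (2*m))"
proof -
  note k = assms(2)
  define L where "L z = hyp3F2_trunc (- 2*of_nat m - 1) (2 + 2*of_nat m) z
            (- 2*of_nat m - 2*of_nat k - 1) (2*z + 2*of_nat m + 2*of_nat k + 2) 1 (2*m+1)" for z :: complex
  define Rt where "Rt z = (of_nat k + 1) * (2*z + 2*of_nat m + 2*of_nat k + 1)
           * pochhammer (2*z + 2*of_nat k + 1) (2*m) * pochhammer (2 + of_nat k) (2*m)
         / ((2*of_nat m + 2*of_nat k + 1) * (z + of_nat k + 1)
           * pochhammer (2*of_nat k + 1) (2*m) * pochhammer (2 + z + of_nat k) (2*m))" for z :: complex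
  have r1: "(- 2*of_nat m - 1 :: complex) = - of_nat (2*m+1)" by simp
  have r2: "(2 + 2*of_nat m :: complex) = of_nat (2*m+1) + 1" by simp
  have r3: "(- 2*of_nat m - 2*of_nat k - 1 :: complex) = - of_nat (2*m+1) - 2*of_nat k" by simp
  have r4: "2*z + 2*of_nat m + 2*of_nat k + 2 = 2*z + of_nat (2*m+1) + 2*of_nat k + (1::complex)" for z :: complex by simp
  have eqL: "L z = (\<Sum>n<2*m+1+1. T (2*m+1) k z n)" for z :: complex
  proof -
    have "{0..2*m+1} = {..<2*m+1+1}" by auto
    then show ?thesis unfolding L_def hyp3F2_trunc_def T_def r1 r2 r3 r4 by simp
  qed
  have eqR: "Rt z = R2 (2*m+1) k z" for z :: complex
  proof -
    have p1: "pochhammer (of_nat k + 1 :: complex) (2*m+1) = (of_nat k + 1) * pochhammer (2 + of_nat k) (2*m)"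
      using pochhammer_rec[of "of_nat k + 1 :: complex" "2*m"] by (simp add: add_ac)
    have p2: "pochhammer (z + of_nat k + 1) (2*m+1) = (z + of_nat k + 1) * pochhammer (2 + z + of_nat k) (2*m)"
      using pochhammer_rec[of "z + of_nat k + 1" "2*m"] by (simp add: add_ac)
    have p3: "pochhammer (2*z + 2*of_nat k + 1) (2*m+1) = pochhammer (2*z + 2*of_nat k + 1) (2*m) * (2*z + 2*of_nat m + 2*of_nat k + 1)"
      using pochhammer_Suc[of "2*z + 2*of_nat k + 1" "2*m"] by (simp add: add_ac)
    have p4: "pochhammer (2*of_nat k + 1 :: complex) (2*m+1) = pochhammer (2*of_nat k + 1) (2*m) * (2*of_nat m + 2*of_nat k + 1)"
      using pochhammer_Suc[of "2*of_nat k + 1 :: complex" "2*m"] by (simp add: add_ac)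
    show ?thesis unfolding Rt_def R2_def p1 p2 p3 p4 by (simp add: divide_inverse inverse_mult_distrib mult_ac)
  qed
  have eqLR: "L z = Rt z" if "Im z \<noteq> 0" for z :: complex
    unfolding eqL eqR using gen[OF that k] .
  have nzb2: "pochhammer (2*\<beta> + 2*of_nat m + 2*of_nat k + 2) n \<noteq> 0" for n
  proof
    assume "pochhammer (2*\<beta> + 2*of_nat m + 2*of_nat k + 2) n = 0"
    then obtain j where "2*\<beta> + 2*of_nat m + 2*of_nat k + 2 = - of_nat j" by (auto simp: pochhammer_eq_0_iff)
    then show False using assms(4) unfolding nonpos_int_c_def by blast
  qed
  have nzneg: "pochhammer (- 2*of_nat m - 2*of_nat k - 1 :: complex) n \<noteq> 0" if "n \<le> 2*m+1" for n
  proof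
    assume "pochhammer (- 2*of_nat m - 2*of_nat k - 1 :: complex) n = 0"
    then obtain j where j: "j < n" "(- 2*of_nat m - 2*of_nat k - 1 :: complex) = - of_nat j" by (auto simp: pochhammer_eq_0_iff)
    then have "(of_nat (2*m + 2*k + 1) :: complex) = of_nat j" by (simp add: algebra_simps)
    then have "2*m + 2*k + 1 = j" using of_nat_eq_iff by blast
    then show False using j that k by simp
  qed
  have nzbk: "\<beta> + of_nat k + 1 \<noteq> 0"
  proof
    assume "\<beta> + of_nat k + 1 = 0"
    then have "\<beta> = - of_nat (k+1)" by (simp add: algebra_simps eq_neg_iff_add_eq_0)
    then show False using assms(3) unfolding nonpos_int_c_def by blast
  qed
  have nzbp: "pochhammer (2 + \<beta> + of_nat k) (2*m) \<noteq> 0"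
  proof
    assume "pochhammer (2 + \<beta> + of_nat k) (2*m) = 0"
    then obtain j where "2 + \<beta> + of_nat k = - of_nat j" by (auto simp: pochhammer_eq_0_iff)
    then have "\<beta> = - of_nat (j + k + 2)" by (simp add: algebra_simps eq_neg_iff_add_eq_0)
    then show False using assms(3) unfolding nonpos_int_c_def by blast
  qed
  have nzkp: "pochhammer (2*of_nat k + 1 :: complex) (2*m) \<noteq> 0"
  proof
    assume "pochhammer (2*of_nat k + 1 :: complex) (2*m) = 0"
    then obtain j where "(2*of_nat k + 1 :: complex) = - of_nat j" by (auto simp: pochhammer_eq_0_iff)
    then have "(2*of_nat k + 1 :: complex) + of_nat j = 0" by simp
    moreover have "(2*of_nat k + 1 :: complex) + of_nat j = of_nat (Suc (2*k + j))" by simp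
    ultimately have "(of_nat (Suc (2*k + j)) :: complex) = 0" by simp
    then show False by (simp only: of_nat_eq_0_iff)
  qed
  have nzmk: "(2*of_nat m + 2*of_nat k + 1 :: complex) \<noteq> 0"
  proof -
    have "(of_nat (Suc (2*m + 2*k)) :: complex) \<noteq> 0" by (rule of_nat_neq_0)
    then show ?thesis by (simp add: add_ac)
  qed
  have contL: "isCont L \<beta>"
  proof -
    have "isCont (\<lambda>z. \<Sum>n=0..2*m+1. pochhammer (- 2*of_nat m - 1) n * pochhammer (2 + 2*of_nat m) n * pochhammer z n
                 / (pochhammer (- 2*of_nat m - 2*of_nat k - 1) n * pochhammer (2*z + 2*of_nat m + 2*of_nat k + 2) n) * 1 ^ n / of_nat (fact n)) \<beta>"
      by (intro continuous_intros) (use nzb2 nzneg in auto)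
    then show ?thesis unfolding L_def[abs_def] hyp3F2_trunc_def .
  qed
  have contR: "isCont Rt \<beta>"
    unfolding Rt_def[abs_def] by (intro continuous_intros) (use nzmk nzbk nzkp nzbp in auto)
  obtain w :: "nat \<Rightarrow> complex" where w: "w \<longlonglongrightarrow> \<beta>" "\<And>j. Im (w j) \<noteq> 0"
  proof (cases "Im \<beta> = 0")
    case True
    define w where "w j = \<beta> + \<i> * of_real (inverse (real (Suc j)))" for j
    have "w \<longlonglongrightarrow> \<beta> + \<i> * of_real 0"
      unfolding w_def by (intro tendsto_intros LIMSEQ_inverse_real_of_nat)
    moreover have "Im (w j) \<noteq> 0" for j unfolding w_def using True by simp
    ultimately show ?thesis using that by simp
  next
    case False
    show ?thesis by (rule that[of "\<lambda>j. \<beta>"]) (use False in auto)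
  qed
  have "(\<lambda>j. L (w j)) \<longlonglongrightarrow> L \<beta>" by (rule isCont_tendsto_compose[OF contL w(1)])
  moreover have "(\<lambda>j. L (w j)) \<longlonglongrightarrow> Rt \<beta>"
    using isCont_tendsto_compose[OF contR w(1)] eqLR[OF w(2)] by simp
  ultimately have "L \<beta> = Rt \<beta>" by (rule LIMSEQ_unique)
  then show ?thesis unfolding L_def Rt_def .
qed

end
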